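(* For every $\nu\in\mathbb{C}$, there is no $E_0\in\mathbb{C}$ and no $M\in\mathbb{C}(z,E)$, regular at $E=E_0$, such that $$H(z,E):=M^2z^2+Mz-M'z^2-z^4+z^2E-4\nu^2+1=O((E-E_0)^3)\quad (E\to E_0).$$ Equivalently, in the factorization $H=w(E)P(z)/Q(z,E)$ with polynomials $w,P,Q$, the polynomial $w$ has no root of multiplicity $\ge 3$.
   Context: $'$ denotes $\partial/\partial z$. $H$ is the expression under the square root in the eigenfunction form $\psi=z^{3/2}\left(\frac{M}{2z}\mathcal{W}(E/4,\nu,z^2)+\mathcal{W}'(E/4,\nu,z^2)\right)/\sqrt{H}$, where $\mathcal W(\mu,\nu,z)$ solves $y''+\left(-\frac14+\frac{\mu}{z}+\frac{1/4-\nu^2}{z^2}\right)y=0$. *)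

theory Defs
  imports "HOL-Computational_Algebra.Polynomial"
begin

(* Bivariate polynomials in C[z,E] are represented as nested polynomials:
   the OUTER variable is E, the coefficients are polynomials in z.
   An element of C(z,E) is a quotient A/B of two such polynomials. *)
type_synonym bipoly = "complex poly poly"

definition Zvar :: bipoly where "Zvar = [: [:0, 1:] :]"
definition Evar :: bipoly where "Evar = [:0, 1:]"
definition bconst :: "complex \<Rightarrow> bipoly" where "bconst c = [: [:c:] :]"

definition dz :: "bipoly \<Rightarrow> bipoly" where "dz p = map_poly pderiv p"

definition at_E :: "bipoly \<Rightarrow> complex \<Rightarrow> complex poly" where
  "at_E p E0 = poly p [:E0:]"

(* The rational function A/B is regular at E = E0 (denominator does not vanish
   identically on E = E0). *)
definition regular_at_E :: "bipoly \<Rightarrow> complex \<Rightarrow> bool" where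
  "regular_at_E B E0 \<longleftrightarrow> at_E B E0 \<noteq> 0"

(* For M = A/B, with M' = (dz A * B - A * dz B)/B^2, one has
   H * B^2 = Hnum nu A B where
   H = M^2 z^2 + M z - M' z^2 - z^4 + z^2 E - 4 nu^2 + 1. *)
definition Hnum :: "complex \<Rightarrow> bipoly \<Rightarrow> bipoly \<Rightarrow> bipoly" where
  "Hnum \<nu> A B =
     A^2 * Zvar^2 + A * B * Zvar - (dz A * B - A * dz B) * Zvar^2
     + (- (Zvar^4) + Zvar^2 * Evar - bconst (4 * \<nu>^2) + 1) * B^2"

(* H = O((E-E0)^3) as E -> E0 in C(z,E): the rational function H/(E-E0)^3
   equals some C/D with D regular at E0, i.e. (cross-multiplying, since
   H = Hnum/B^2)  Hnum * D = (E-E0)^3 * C * B^2. *)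
definition H_bigO3 :: "complex \<Rightarrow> bipoly \<Rightarrow> bipoly \<Rightarrow> complex \<Rightarrow> bool" where
  "H_bigO3 \<nu> A B E0 \<longleftrightarrow>
     (\<exists>C D. regular_at_E D E0 \<and>
        Hnum \<nu> A B * D = (Evar - bconst E0)^3 * C * B^2)"

end

theory Submission
  imports Defs "HOL-Computational_Algebra.Computational_Algebra"
begin

unbundle Formal_Laurent_Series.fps_syntax
unbundle Formal_Power_Series.fps_syntax

definition hev :: "('a::zero \<Rightarrow> 'b::comm_ring_1) \<Rightarrow> 'b \<Rightarrow> 'a poly \<Rightarrow> 'b" where
  "hev g T p = poly (map_poly g p) T"

locale rhom =
  fixes g :: "'a::comm_ring_1 \<Rightarrow> 'b::comm_ring_1"
  assumes g_add: "g (x + y) = g x + g y"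
      and g_mult: "g (x * y) = g x * g y"
      and g_one: "g 1 = 1"
begin

lemma g_zero: "g 0 = 0"
  using g_add[of 0 0] by simp

lemma g_uminus: "g (- x) = - g x"
  using g_add[of x "-x"] g_zero by (metis add.right_inverse add.inverse_unique)

lemma hev_pCons: "hev g T (pCons c p) = g c + T * hev g T p"
  by (simp add: hev_def map_poly_pCons g_zero)

lemma hev_0[simp]: "hev g T 0 = 0"
  by (simp add: hev_def)

lemma hev_const[simp]: "hev g T [:c:] = g c"
  by (simp add: hev_pCons)

lemma hev_add: "hev g T (p + q) = hev g T p + hev g T q"
proof (induction p q rule: poly_induct2)
  case 0 then show ?case by simp
next
  case (pCons a p b q)
  then show ?case by (simp add: hev_pCons g_add algebra_simps)
qed

lemma hev_smult: "hev g T (smult c p) = g c * hev g T p"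
  by (induction p) (simp_all add: hev_pCons g_mult g_zero algebra_simps)

lemma hev_mult: "hev g T (p * q) = hev g T p * hev g T q"
proof (induction p)
  case 0 then show ?case by simp
next
  case (pCons a p)
  have "hev g T (pCons a p * q) = hev g T (smult a q + pCons 0 (p * q))"
    by simp
  also have "\<dots> = g a * hev g T q + T * hev g T (p*q)"
    by (simp add: hev_add hev_smult hev_pCons g_zero)
  finally show ?case using pCons by (simp add: hev_pCons algebra_simps)
qed

lemma hev_uminus: "hev g T (- p) = - hev g T p"
  by (induction p) (simp_all add: hev_pCons g_uminus algebra_simps)

lemma hev_diff: "hev g T (p - q) = hev g T p - hev g T q"
  using hev_add[of T p "-q"] by (simp add: hev_uminus)

lemma hev_one[simp]: "hev g T 1 = 1"
  by (simp add: one_pCons g_one)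

lemma hev_power: "hev g T (p ^ n) = hev g T p ^ n"
  by (induction n) (simp_all add: hev_mult)

lemma hev_X: "hev g T [:0, 1:] = T"
  by (simp add: hev_pCons g_zero g_one)

end


interpretation flsc: rhom "fls_const :: complex \<Rightarrow> complex fls"
  by unfold_locales (simp_all add: fls_plus_const)

type_synonym F = "complex fls"

definition ev :: "F \<Rightarrow> complex poly \<Rightarrow> F" where
  "ev Z p = hev fls_const Z p"

definition dd :: "F \<Rightarrow> F \<Rightarrow> F" where
  "dd Z f = fls_deriv f / fls_deriv Z"

lemma ev_hom:
  "ev Z (p + q) = ev Z p + ev Z q" "ev Z (p * q) = ev Z p * ev Z q"
  "ev Z (p - q) = ev Z p - ev Z q" "ev Z (- p) = - ev Z p"
  "ev Z (p ^ n) = ev Z p ^ n" "ev Z 1 = 1" "ev Z 0 = 0" "ev Z [:c:] = fls_const c"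
  "ev Z (pCons c p) = fls_const c + Z * ev Z p" "ev Z [:0,1:] = Z"
  by (simp_all add: ev_def flsc.hev_add flsc.hev_mult flsc.hev_diff flsc.hev_uminus
      flsc.hev_power flsc.hev_pCons flsc.hev_X)

lemma ev_smult: "ev Z (smult c p) = fls_const c * ev Z p"
  by (simp add: ev_def flsc.hev_smult)

lemma dd_add: "dd Z (f + g) = dd Z f + dd Z g"
  by (simp add: dd_def add_divide_distrib)
lemma dd_diff: "dd Z (f - g) = dd Z f - dd Z g"
  by (simp add: dd_def diff_divide_distrib)
lemma dd_uminus: "dd Z (- f) = - dd Z f"
  by (simp add: dd_def)
lemma dd_mult: "dd Z (f * g) = dd Z f * g + f * dd Z g"
  by (simp add: dd_def add_divide_distrib)
lemma dd_const[simp]: "dd Z (fls_const c) = 0"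
  by (simp add: dd_def)
lemma dd_0[simp]: "dd Z 0 = 0" and dd_1[simp]: "dd Z 1 = 0"
  by (simp_all add: dd_def)
lemma dd_Z: "fls_deriv Z \<noteq> 0 \<Longrightarrow> dd Z Z = 1"
  by (simp add: dd_def)
lemma dd_sum: "dd Z (sum h S) = (\<Sum>i\<in>S. dd Z (h i))"
  by (simp add: dd_def fls_deriv_sum sum_divide_distrib)

lemma ev_pderiv:
  assumes "fls_deriv Z \<noteq> 0"
  shows "ev Z (pderiv p) = dd Z (ev Z p)"
proof (induction p)
  case 0 then show ?case by (simp add: ev_hom)
next
  case (pCons c p)
  show ?case
    by (simp add: pderiv_pCons ev_hom dd_add dd_mult dd_Z[OF assms] pCons.IH)
qed

definition DD :: "F \<Rightarrow> F fps \<Rightarrow> F fps" where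
  "DD Z f = Abs_fps (\<lambda>n. dd Z (f $ n))"

lemma DD_nth[simp]: "DD Z f $ n = dd Z (f $ n)"
  by (simp add: DD_def)

lemma DD_add: "DD Z (f + g) = DD Z f + DD Z g"
  by (simp add: fps_eq_iff dd_add)
lemma DD_diff: "DD Z (f - g) = DD Z f - DD Z g"
  by (simp add: fps_eq_iff dd_diff)
lemma DD_mult: "DD Z (f * g) = DD Z f * g + f * DD Z g"
  by (simp add: fps_eq_iff fps_mult_nth dd_sum dd_mult sum.distrib)
lemma DD_const[simp]: "DD Z (fps_const c) = fps_const (dd Z c)"
  by (simp add: fps_eq_iff)
lemma DD_X[simp]: "DD Z fps_X = 0"
  by (simp add: fps_eq_iff)


lemma rhom_phi: "rhom (\<lambda>q. fps_const (ev Z q))"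
  by unfold_locales (simp_all add: ev_hom)

definition Tsh :: "complex \<Rightarrow> F fps" where
  "Tsh E0 = fps_const (fls_const E0) + fps_X"

definition Phi :: "F \<Rightarrow> complex \<Rightarrow> bipoly \<Rightarrow> F fps" where
  "Phi Z E0 A = hev (\<lambda>q. fps_const (ev Z q)) (Tsh E0) A"

lemma Phi_hom:
  "Phi Z E0 (p + q) = Phi Z E0 p + Phi Z E0 q" "Phi Z E0 (p * q) = Phi Z E0 p * Phi Z E0 q"
  "Phi Z E0 (p - q) = Phi Z E0 p - Phi Z E0 q"
  "Phi Z E0 (p ^ n) = Phi Z E0 p ^ n" "Phi Z E0 1 = 1"
  "Phi Z E0 (pCons c p) = fps_const (ev Z c) + Tsh E0 * Phi Z E0 p"
  "Phi Z E0 [:c:] = fps_const (ev Z c)" "Phi Z E0 (- p) = - Phi Z E0 p"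
  by (simp_all add: Phi_def rhom.hev_uminus[OF rhom_phi] rhom.hev_add[OF rhom_phi] rhom.hev_mult[OF rhom_phi]
      rhom.hev_diff[OF rhom_phi] rhom.hev_power[OF rhom_phi] rhom.hev_one[OF rhom_phi]
      rhom.hev_pCons[OF rhom_phi] rhom.hev_const[OF rhom_phi] rhom.hev_0[OF rhom_phi])

lemma Phi_0[simp]: "Phi Z E0 0 = 0"
  by (simp add: Phi_def rhom.hev_0[OF rhom_phi])

lemma Phi_Zvar: "Phi Z E0 Zvar = fps_const Z"
  by (simp add: Zvar_def Phi_hom ev_hom)
lemma Phi_Evar: "Phi Z E0 Evar = Tsh E0"
  by (simp add: Evar_def Phi_hom ev_hom)
lemma Phi_bconst: "Phi Z E0 (bconst c) = fps_const (fls_const c)"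
  by (simp add: bconst_def Phi_hom ev_hom)
lemma Phi_shift: "Phi Z E0 (Evar - bconst E0) = fps_X"
  by (simp add: Phi_Evar Phi_bconst Phi_hom Tsh_def)

lemma dz_pCons: "dz (pCons q A) = pCons (pderiv q) (dz A)"
  by (simp add: dz_def map_poly_pCons)

lemma DD_Tsh[simp]: "DD Z (Tsh E0) = 0"
  by (simp add: Tsh_def DD_add)

lemma Phi_dz:
  assumes "fls_deriv Z \<noteq> 0"
  shows "Phi Z E0 (dz A) = DD Z (Phi Z E0 A)"
proof (induction A)
  case 0 then show ?case by (simp add: dz_def fps_eq_iff)
next
  case (pCons q A)
  show ?case
    by (simp add: dz_pCons Phi_hom DD_add DD_mult pCons.IH ev_pderiv[OF assms])
qed

definition tc :: "complex \<Rightarrow> bipoly \<Rightarrow> nat \<Rightarrow> complex poly" where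
  "tc E0 A k = coeff (pcompose A [:[:E0:], 1:]) k"

lemma Phi_nth: "Phi Z E0 A $ k = ev Z (tc E0 A k)"
proof (induction A arbitrary: k)
  case 0 then show ?case by (simp add: tc_def ev_hom)
next
  case (pCons q A)
  have S: "[:[:E0:], 1:] * P = smult [:E0:] P + pCons 0 P" for P :: bipoly
    by (simp add: algebra_simps)
  have c: "tc E0 (pCons q A) k = (if k = 0 then q else 0) + [:E0:] * tc E0 A k
            + (if k = 0 then 0 else tc E0 A (k - 1))"
    by (cases k) (simp_all add: tc_def pcompose_pCons S coeff_pCons)
  have "Phi Z E0 (pCons q A) $ k = (if k = 0 then ev Z q else 0) + fls_const E0 * Phi Z E0 A $ k
      + (if k = 0 then 0 else Phi Z E0 A $ (k - 1))"
    by (simp add: Phi_hom Tsh_def distrib_right)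
  then show ?case using pCons.IH by (simp add: c ev_hom ev_smult)
qed

lemma tc_0: "tc E0 A 0 = at_E A E0"
  by (simp add: tc_def at_E_def)

lemma fps_mult_nth_2: "(f * g) $ 2 = f$0 * g$2 + f$1 * g$1 + f$2 * g$(0::nat)"
  by (simp add: fps_mult_nth numeral_2_eq_2)

lemma Tsh_nth: "Tsh E0 $ 0 = fls_const E0" "Tsh E0 $ 1 = 1" "Tsh E0 $ 2 = 0"
   "Tsh E0 $ Suc 0 = 1"
  unfolding Tsh_def by simp_all

lemma alg1:
  fixes M B dM dB z T c :: "'a::comm_ring_1"
  shows "(M*B)^2 * z^2 + (M*B)*B*z - ((dM*B + M*dB)*B - (M*B)*dB)*z^2
     + (-(z^4) + z^2*T - c + 1)*B^2 = B^2*(z^2*(M^2 - dM) + z*M - z^4 + z^2*T - c + 1)"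
  by (simp add: algebra_simps power2_eq_square)

lemma extract_eqs:
  fixes \<nu> E0 :: complex and A B C Dd :: bipoly and Z :: F
  assumes dZ: "fls_deriv Z \<noteq> 0"
    and inj: "\<And>p. ev Z p = 0 \<Longrightarrow> p = 0"
    and rB: "regular_at_E B E0" and rD: "regular_at_E Dd E0"
    and eq: "Hnum \<nu> A B * Dd = (Evar - bconst E0)^3 * C * B^2"
  defines "c4 \<equiv> fls_const (4 * \<nu>^2)"
  shows "\<exists>m0 m1 m2.
     Z^2 * (m0^2 - dd Z m0) + Z * m0 - Z^4 + Z^2 * fls_const E0 - c4 + 1 = 0 \<and>
     Z^2 * (2 * m0 * m1 - dd Z m1) + Z * m1 + Z^2 = 0 \<and>
     Z^2 * (2 * m0 * m2 + m1^2 - dd Z m2) + Z * m2 = 0 \<and>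
     m1 = ev Z (tc E0 A 1 * tc E0 B 0 - tc E0 A 0 * tc E0 B 1) / ev Z ((tc E0 B 0)^2)"
proof -
  let ?P = "Phi Z E0"
  define Ah where "Ah = ?P A"
  define Bh where "Bh = ?P B"
  define Ch where "Ch = ?P C"
  define Dh where "Dh = ?P Dd"
  have b0: "Bh $ 0 \<noteq> 0"
    using rB inj by (auto simp: Bh_def Phi_nth tc_0 regular_at_E_def)
  have d0: "Dh $ 0 \<noteq> 0"
    using rD inj by (auto simp: Dh_def Phi_nth tc_0 regular_at_E_def)
  define M where "M = Ah * inverse Bh"
  have MB: "M * Bh = Ah"
    using inverse_mult_eq_1[OF b0] by (simp add: M_def mult.assoc)
  have DA: "DD Z Ah = DD Z M * Bh + M * DD Z Bh"
    using MB DD_mult[of Z M Bh] by simp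
  define Hh where "Hh = fps_const Z^2 * (M^2 - DD Z M) + fps_const Z * M
      - fps_const Z^4 + fps_const Z^2 * Tsh E0 - fps_const c4 + 1"
  have PH: "?P (Hnum \<nu> A B) = Bh^2 * Hh"
  proof -
    have "?P (Hnum \<nu> A B) = Ah^2 * fps_const Z^2 + Ah * Bh * fps_const Z
        - (DD Z Ah * Bh - Ah * DD Z Bh) * fps_const Z^2
        + (- (fps_const Z^4) + fps_const Z^2 * Tsh E0 - fps_const c4 + 1) * Bh^2"
      by (simp add: Hnum_def Phi_hom Phi_Zvar Phi_Evar Phi_bconst Phi_dz[OF dZ] Ah_def Bh_def c4_def
          del: fps_const_power)
    also have "\<dots> = Bh^2 * Hh"
      unfolding Hh_def MB[symmetric] DD_mult by (rule alg1)
    finally show ?thesis .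
  qed
  have "?P (Hnum \<nu> A B) * Dh = fps_X^3 * Ch * Bh^2"
    using arg_cong[OF eq, of ?P] unfolding Phi_hom(2) Phi_hom(4) Phi_shift Ch_def Dh_def Bh_def .
  then have "Bh^2 * (Hh * Dh) = Bh^2 * (fps_X^3 * Ch)"
    unfolding PH by (simp add: algebra_simps)
  moreover have "Bh^2 \<noteq> 0" using b0 by auto
  ultimately have HD: "Hh * Dh = fps_X^3 * Ch" by simp
  have "Hh = fps_X^3 * (Ch * inverse Dh)"
    using HD inverse_mult_eq_1'[OF d0]
    by (metis mult.assoc mult.right_neutral)
  then have Hz: "Hh $ k = 0" if "k < 3" for k
    using that by (simp add: fps_X_power_mult_nth)
  define m0 where "m0 = M $ 0"
  define m1 where "m1 = M $ 1"
  define m2 where "m2 = M $ 2"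
  have "Hh $ 0 = 0" using Hz by simp
  then have e0: "Z^2 * (m0^2 - dd Z m0) + Z * m0 - Z^4 + Z^2 * fls_const E0 - c4 + 1 = 0"
    by (simp add: Hh_def m0_def power2_eq_square Tsh_nth)
  have "Hh $ 1 = 0" using Hz by simp
  then have e1: "Z^2 * (2 * m0 * m1 - dd Z m1) + Z * m1 + Z^2 = 0"
    by (simp add: Hh_def m0_def m1_def power2_eq_square fps_mult_nth_1 Tsh_nth algebra_simps)
  have "Hh $ 2 = 0" using Hz by simp
  then have e2: "Z^2 * (2 * m0 * m2 + m1^2 - dd Z m2) + Z * m2 = 0"
    by (simp add: Hh_def m0_def m1_def m2_def power2_eq_square fps_mult_nth_2 Tsh_nth algebra_simps)
  have a0: "m0 * Bh $ 0 = Ah $ 0" using arg_cong[OF MB, of "\<lambda>f. f $ 0"] by (simp add: m0_def)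
  have a1: "m0 * Bh $ 1 + m1 * Bh $ 0 = Ah $ 1"
    using arg_cong[OF MB, of "\<lambda>f. f $ 1"] by (simp add: m0_def m1_def fps_mult_nth_1)
  have "m1 = (Ah $ 1 * Bh $ 0 - Ah $ 0 * Bh $ 1) / (Bh $ 0)^2"
    unfolding a0[symmetric] a1[symmetric] using b0 by (simp add: field_simps power2_eq_square)
  then have "m1 = ev Z (tc E0 A 1 * tc E0 B 0 - tc E0 A 0 * tc E0 B 1) / ev Z ((tc E0 B 0)^2)"
    by (simp add: Ah_def Bh_def Phi_nth ev_hom)
  with e0 e1 e2 show ?thesis by blast
qed


definition lo :: "F \<Rightarrow> int \<Rightarrow> bool" where
  "lo f n \<longleftrightarrow> (\<forall>k<n. f $$ k = 0)"

lemma lo_subdeg: "lo f (fls_subdegree f)"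
  by (simp add: lo_def)

lemma lo_mono: "lo f n \<Longrightarrow> m \<le> n \<Longrightarrow> lo f m"
  by (auto simp: lo_def)

lemma lo_D: "lo f n \<Longrightarrow> k < n \<Longrightarrow> f $$ k = 0"
  by (auto simp: lo_def)

lemma lo_subdegree_ge: "lo f n \<Longrightarrow> f \<noteq> 0 \<Longrightarrow> n \<le> fls_subdegree f"
  by (auto simp: lo_def intro: fls_subdegree_geI)

lemma lo_add: "lo f n \<Longrightarrow> lo g n \<Longrightarrow> lo (f + g) n"
  by (auto simp: lo_def)
lemma lo_diff: "lo f n \<Longrightarrow> lo g n \<Longrightarrow> lo (f - g) n"
  by (auto simp: lo_def)
lemma lo_0[simp]: "lo 0 n"
  by (auto simp: lo_def)
lemma lo_const: "lo (fls_const c) 0"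
  by (auto simp: lo_def)

lemma lo_mult: "lo f n \<Longrightarrow> lo g m \<Longrightarrow> lo (f * g) (n + m)"
proof -
  assume a: "lo f n" "lo g m"
  show ?thesis
  proof (cases "f = 0 \<or> g = 0")
    case True then show ?thesis by auto
  next
    case False
    then have "n \<le> fls_subdegree f" "m \<le> fls_subdegree g"
      using a lo_subdegree_ge by auto
    then show ?thesis unfolding lo_def by (auto intro!: fls_times_nth_eq0)
  qed
qed

lemma lo_step: "lo f n \<Longrightarrow> f $$ n = 0 \<Longrightarrow> lo f (n+1)"
  unfolding lo_def
proof (intro allI impI)
  fix k assume "\<forall>k<n. f $$ k = 0" "f $$ n = 0" "k < n + 1"
  then show "f $$ k = 0" by (cases "k < n") (auto simp: not_less)
qed

lemma lo_mult_base:
  assumes "lo f n" "lo g m"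
  shows "(f * g) $$ (n + m) = f $$ n * g $$ m"
proof (cases "f $$ n = 0 \<or> g $$ m = 0")
  case True
  then show ?thesis
  proof
    assume "f $$ n = 0"
    then have "lo f (n+1)" using assms(1) lo_step by blast
    then have "lo (f*g) (n+1+m)" using lo_mult assms(2) by blast
    then show ?thesis using \<open>f $$ n = 0\<close> by (auto simp: lo_def)
  next
    assume "g $$ m = 0"
    then have "lo g (m+1)" using assms(2) lo_step by blast
    then have "lo (f*g) (n+(m+1))" using lo_mult assms(1) by blast
    then show ?thesis using \<open>g $$ m = 0\<close> by (auto simp: lo_def)
  qed
next
  case False
  then have "fls_subdegree f = n" "fls_subdegree g = m"
    using assms by (auto simp: lo_def intro!: fls_subdegree_eqI)
  then show ?thesis using fls_times_base[of f g] by simp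
qed

lemma lo_power: "lo f n \<Longrightarrow> lo (f ^ k) (int k * n)"
proof (induction k)
  case 0 then show ?case by (simp add: lo_def)
next
  case (Suc k)
  then have "lo (f * f^k) (n + int k * n)" using lo_mult by blast
  then show ?case by (simp add: algebra_simps)
qed

lemma lo_inverse: "lo (inverse f) (- fls_subdegree f)"
  using lo_subdeg[of "inverse f"] by simp

lemma lo_deriv: "lo f n \<Longrightarrow> lo (fls_deriv f) (n - 1)"
  by (auto simp: lo_def)

lemma alg2:
  fixes x y P :: "'a::field"
  assumes "x \<noteq> 0"
  shows "y * (- (P * x + 1) * (inverse x)^2) + (P * y + x^2) * inverse x = x - y * inverse (x^2)"
  using assms by (simp add: field_simps power2_eq_square)

lemma local_res:
  fixes P m1 m2 :: F
  assumes lP: "lo P (-1)"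
    and e1: "fls_deriv m1 = P * m1 + 1"
    and e2: "fls_deriv m2 = P * m2 + m1^2"
  shows "m1 $$ (-1) = 0"
proof (rule ccontr)
  assume r: "m1 $$ (-1) \<noteq> 0"
  then have m1nz: "m1 \<noteq> 0" by auto
  define e where "e = fls_subdegree m1"
  have ele: "e \<le> -1" using r unfolding e_def by (rule fls_subdegree_leI)
  have u: "m1 $$ e \<noteq> 0" using m1nz by (simp add: e_def)
  have lm1: "lo m1 e" unfolding e_def by (rule lo_subdeg)
  have "fls_deriv m1 $$ (e - 1) = (P * m1 + 1) $$ (e - 1)" using e1 by simp
  moreover have "(P * m1) $$ (e - 1) = P $$ (-1) * m1 $$ e"
    using lo_mult_base[OF lP lm1] by (simp add: add.commute)
  moreover have "(1::F) $$ (e - 1) = 0" using ele by simp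
  ultimately have "of_int e * m1 $$ e = P $$ (-1) * m1 $$ e" by simp
  then have pe: "P $$ (-1) = of_int e" using u by simp
  have lm2: "lo m2 (2*e+1)"
  proof (rule ccontr)
    assume nl: "\<not> lo m2 (2*e+1)"
    then have m2nz: "m2 \<noteq> 0" by auto
    define s where "s = fls_subdegree m2"
    from nl obtain k where k: "k < 2*e+1" "m2 $$ k \<noteq> 0" unfolding lo_def by auto
    have "s \<le> k" unfolding s_def using k(2) by (rule fls_subdegree_leI)
    then have sle: "s \<le> 2*e" using k(1) by simp
    have w: "m2 $$ s \<noteq> 0" using m2nz by (simp add: s_def)
    have lm2': "lo m2 s" unfolding s_def by (rule lo_subdeg)
    have "fls_deriv m2 $$ (s - 1) = (P * m2 + m1^2) $$ (s - 1)" using e2 by simp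
    moreover have "(P * m2) $$ (s - 1) = P $$ (-1) * m2 $$ s"
      using lo_mult_base[OF lP lm2'] by (simp add: add.commute)
    moreover have "(m1^2) $$ (s - 1) = 0"
      using lo_power[OF lm1, of 2] sle by (auto simp: lo_def)
    ultimately have "of_int s * m2 $$ s = of_int e * m2 $$ s" using pe by simp
    then have "s = e" using w by simp
    then show False using sle ele by simp
  qed
  define q where "q = m2 * inverse (m1^2)"
  have "lo (inverse (m1^2)) (- (2 * e))"
    using lo_inverse[of "m1^2"] m1nz by (simp add: fls_subdegree_pow e_def)
  then have "lo q 1" unfolding q_def using lo_mult[OF lm2] by fastforce
  then have q1: "q $$ (-1) = 0" by (simp add: lo_def)
  have "fls_deriv (m2 * inverse m1) = m2 * fls_deriv (inverse m1) + fls_deriv m2 * inverse m1"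
    by (rule fls_deriv_mult)
  also have "\<dots> = m2 * (- (P * m1 + 1) * (inverse m1)^2) + (P * m2 + m1^2) * inverse m1"
    unfolding fls_inverse_deriv e1 e2 ..
  also have "\<dots> = m1 - q"
    unfolding q_def using m1nz by (rule alg2)
  finally have "fls_deriv (m2 * inverse m1) = m1 - q" .
  then have "(m1 - q) $$ (-1) = 0" by (metis fls_deriv_residue)
  then show False using q1 r by simp
qed


lemma alg3:
  fixes Z m0 A E c :: "'a::field"
  assumes "Z \<noteq> 0" "Z^2 * A + Z * m0 - Z^4 + Z^2 * E - c + 1 = 0"
  shows "A + m0 * inverse Z - Z^2 + E - (c - 1) * (inverse Z)^2 = 0"
proof -
  have "Z^2 * (A + m0 * inverse Z - Z^2 + E - (c - 1) * (inverse Z)^2) = Z^2 * A + Z * m0 - Z^4 + Z^2 * E - c + 1"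
    using assms(1) by (simp add: field_simps power2_eq_square power4_eq_xxxx)
  then show ?thesis using assms by simp
qed
lemma alg4:
  fixes Z m0 m1 d :: "'a::field"
  assumes "Z \<noteq> 0" "Z^2 * (2 * m0 * m1 - d) + Z * m1 + Z^2 = 0"
  shows "d = (m0 + m0 + inverse Z) * m1 + 1"
proof -
  have "Z^2 * ((m0 + m0 + inverse Z) * m1 + 1 - d) = Z^2 * (2 * m0 * m1 - d) + Z * m1 + Z^2"
    using assms(1) by (simp add: field_simps power2_eq_square)
  then show ?thesis using assms by simp
qed
lemma alg5:
  fixes Z m0 m1 m2 d :: "'a::field"
  assumes "Z \<noteq> 0" "Z^2 * (2 * m0 * m2 + m1^2 - d) + Z * m2 = 0"
  shows "d = (m0 + m0 + inverse Z) * m2 + m1^2"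
proof -
  have "Z^2 * ((m0 + m0 + inverse Z) * m2 + m1^2 - d) = Z^2 * (2 * m0 * m2 + m1^2 - d) + Z * m2"
    using assms(1) by (simp add: field_simps power2_eq_square)
  then show ?thesis using assms by simp
qed

lemma lo_one: "lo 1 0"
  by (simp add: lo_def)

lemma finite_point:
  fixes a E0 :: complex and c4 m0 m1 m2 :: F
  defines "Z \<equiv> fls_X + fls_const a"
  assumes e0: "Z^2 * (m0^2 - dd Z m0) + Z * m0 - Z^4 + Z^2 * fls_const E0 - c4 + 1 = 0"
    and e1: "Z^2 * (2 * m0 * m1 - dd Z m1) + Z * m1 + Z^2 = 0"
    and e2: "Z^2 * (2 * m0 * m2 + m1^2 - dd Z m2) + Z * m2 = 0"
    and c4: "c4 = fls_const c"
  shows "m1 $$ (-1) = 0"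
proof -
  have dZ: "fls_deriv Z = 1" by (simp add: Z_def)
  have ddZ: "dd Z f = fls_deriv f" for f by (simp add: dd_def dZ)
  have Z1: "Z $$ 1 = 1" by (simp add: Z_def)
  then have Znz: "Z \<noteq> 0" by auto
  have "fls_subdegree Z \<le> 1" using Z1 by (intro fls_subdegree_leI) simp
  then have liZ: "lo (inverse Z) (-1)" using lo_inverse[of Z] lo_mono by fastforce
  have lZ: "lo Z 0" by (simp add: Z_def lo_def)
  define iZ where "iZ = inverse Z"
  have e0': "m0^2 - fls_deriv m0 + m0 * iZ - Z^2 + fls_const E0 - (c4 - 1) * iZ^2 = 0"
    using alg3[OF Znz e0] by (simp add: ddZ iZ_def)
  have lm0: "lo m0 (-1)"
  proof (rule ccontr)
    assume nl: "\<not> lo m0 (-1)"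
    from nl obtain k where k: "k < -1" "m0 $$ k \<noteq> 0" unfolding lo_def by auto
    define d where "d = fls_subdegree m0"
    have "d \<le> k" unfolding d_def using k(2) by (rule fls_subdegree_leI)
    then have dle: "d \<le> -2" using k(1) by simp
    have m0nz: "m0 \<noteq> 0" using k by auto
    have lam: "m0 $$ d \<noteq> 0" using m0nz by (simp add: d_def)
    have lm: "lo m0 d" unfolding d_def by (rule lo_subdeg)
    have "(m0^2 - fls_deriv m0 + m0 * iZ - Z^2 + fls_const E0 - (c4 - 1) * iZ^2) $$ (2*d) = 0"
      unfolding e0' by simp
    then have "(m0^2) $$ (2*d) - fls_deriv m0 $$ (2*d) + (m0 * iZ) $$ (2*d) - (Z^2) $$ (2*d)
       + fls_const E0 $$ (2*d) - ((c4 - 1) * iZ^2) $$ (2*d) = 0"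
      by (simp only: fls_plus_nth fls_minus_nth)
    moreover have "(m0^2) $$ (2*d) = m0 $$ d * m0 $$ d"
      using lo_mult_base[OF lm lm] by (simp add: power2_eq_square flip: mult_2)
    moreover have "fls_deriv m0 $$ (2*d) = 0"
      using lo_D[OF lm, of "2*d+1"] dle by simp
    moreover have "(m0 * iZ) $$ (2*d) = 0"
      using lo_D[OF lo_mult[OF lm liZ[folded iZ_def]], of "2*d"] dle by simp
    moreover have "(Z^2) $$ (2*d) = 0"
      using lo_D[OF lo_mult[OF lZ lZ], of "2*d"] dle by (simp add: power2_eq_square)
    moreover have "((c4 - 1) * iZ^2) $$ (2*d) = 0"
    proof -
      have "lo (c4 - 1) 0" using c4 lo_diff[OF lo_const lo_one] by simp
      moreover have "lo (iZ^2) (-2)"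
        using lo_mult[OF liZ[folded iZ_def] liZ[folded iZ_def]] by (simp add: power2_eq_square)
      ultimately show ?thesis using lo_D[OF lo_mult, of "c4 - 1" 0 "iZ^2" "-2" "2*d"] dle by simp
    qed
    moreover have "fls_const E0 $$ (2*d) = 0" using dle by simp
    ultimately have "m0 $$ d * m0 $$ d = 0" by (simp only: diff_zero add_0_right)
    then show False using lam by simp
  qed
  define P where "P = m0 + m0 + inverse Z"
  have lP: "lo P (-1)"
    unfolding P_def using lo_add[OF lo_add[OF lm0 lm0] liZ] by simp
  have e1': "fls_deriv m1 = P * m1 + 1"
    using alg4[OF Znz e1] by (simp add: ddZ P_def)
  have e2': "fls_deriv m2 = P * m2 + m1^2"
    using alg5[OF Znz e2] by (simp add: ddZ P_def)
  show ?thesis by (rule local_res[OF lP e1' e2'])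
qed


lemma lo_X: "lo fls_X 1"
  by (simp add: lo_def)

lemma dd_inf: "dd fls_X_inv f = - (fls_X^2 * fls_deriv f)"
proof -
  have "inverse (fls_X_inv^2 :: F) = fls_X^2"
    by (simp add: power_inverse[symmetric] fls_inverse_X_inv)
  then show ?thesis unfolding dd_def by (simp add: divide_inverse mult.commute)
qed

lemma lo_dd_inf: "lo f n \<Longrightarrow> lo (dd fls_X_inv f) (n + 1)"
proof -
  assume "lo f n"
  then have "lo (fls_deriv f) (n - 1)" by (rule lo_deriv)
  moreover have "lo (fls_X^2 :: F) 2"
    using lo_mult[OF lo_X lo_X] by (simp add: power2_eq_square)
  ultimately have "lo (fls_X^2 * fls_deriv f) (2 + (n - 1))" by (metis lo_mult)
  then show ?thesis by (simp add: dd_inf lo_def)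
qed

lemma infinite_point:
  fixes E0 :: complex and c4 m0 m1 :: F
  defines "Z \<equiv> fls_X_inv"
  assumes e0: "Z^2 * (m0^2 - dd Z m0) + Z * m0 - Z^4 + Z^2 * fls_const E0 - c4 + 1 = 0"
    and e1: "Z^2 * (2 * m0 * m1 - dd Z m1) + Z * m1 + Z^2 = 0"
    and c4: "c4 = fls_const c"
  shows "m1 $$ 1 \<noteq> 0"
proof -
  have Znz: "Z \<noteq> 0" by (simp add: Z_def)
  have iZ: "inverse Z = fls_X" by (simp add: Z_def fls_inverse_X_inv)
  have e0': "m0^2 - dd Z m0 + m0 * fls_X - Z^2 + fls_const E0 - (c4 - 1) * fls_X^2 = 0"
    using alg3[OF Znz e0] by (simp add: iZ)
  have lX2: "lo (fls_X^2 :: F) 2"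
    using lo_mult[OF lo_X lo_X] by (simp add: power2_eq_square)
  have lc: "lo (c4 - 1) 0" using c4 lo_diff[OF lo_const lo_one] by simp
  have lcX: "lo ((c4 - 1) * fls_X^2) 2" using lo_mult[OF lc lX2] by simp
  have lZ2: "lo (Z^2) (-2)"
    using lo_mult[OF lo_subdeg[of Z] lo_subdeg[of Z]] by (simp add: Z_def power2_eq_square)
  have coef: "(m0^2) $$ k - dd Z m0 $$ k + (m0 * fls_X) $$ k - (Z^2) $$ k
       + fls_const E0 $$ k - ((c4 - 1) * fls_X^2) $$ k = 0" for k
  proof -
    have "(m0^2 - dd Z m0 + m0 * fls_X - Z^2 + fls_const E0 - (c4 - 1) * fls_X^2) $$ k = 0"
      unfolding e0' by simp
    then show ?thesis by (simp only: fls_plus_nth fls_minus_nth)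
  qed
  have lm0: "lo m0 (-1)"
  proof (rule ccontr)
    assume nl: "\<not> lo m0 (-1)"
    from nl obtain k where k: "k < -1" "m0 $$ k \<noteq> 0" unfolding lo_def by auto
    define d where "d = fls_subdegree m0"
    have "d \<le> k" unfolding d_def using k(2) by (rule fls_subdegree_leI)
    then have dle: "d \<le> -2" using k(1) by simp
    have m0nz: "m0 \<noteq> 0" using k by auto
    have lam: "m0 $$ d \<noteq> 0" using m0nz by (simp add: d_def)
    have lm: "lo m0 d" unfolding d_def by (rule lo_subdeg)
    have "(m0^2) $$ (2*d) = m0 $$ d * m0 $$ d"
      using lo_mult_base[OF lm lm] by (simp add: power2_eq_square flip: mult_2)
    moreover have "dd Z m0 $$ (2*d) = 0"
      using lo_D[OF lo_dd_inf[OF lm], of "2*d"] dle by (simp add: Z_def)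
    moreover have "(m0 * fls_X) $$ (2*d) = 0"
      using lo_D[OF lo_mult[OF lm lo_X], of "2*d"] dle by simp
    moreover have "(Z^2) $$ (2*d) = 0"
      using lo_D[OF lZ2, of "2*d"] dle by simp
    moreover have "((c4 - 1) * fls_X^2) $$ (2*d) = 0"
      using lo_D[OF lcX, of "2*d"] dle by simp
    moreover have "fls_const E0 $$ (2*d) = 0" using dle by simp
    ultimately have "m0 $$ d * m0 $$ d = 0" using coef[of "2*d"] by (simp only: diff_zero add_0_right)
    then show False using lam by simp
  qed
  have lam: "m0 $$ (-1) \<noteq> 0"
  proof
    assume z: "m0 $$ (-1) = 0"
    then have lm: "lo m0 0" using lo_step[OF lm0] by simp
    have "(m0^2) $$ (-2) = 0"
      using lo_D[OF lo_mult[OF lm lm], of "-2"] by (simp add: power2_eq_square)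
    moreover have "dd Z m0 $$ (-2) = 0"
      using lo_D[OF lo_dd_inf[OF lm], of "-2"] by (simp add: Z_def)
    moreover have "(m0 * fls_X) $$ (-2) = 0"
      using lo_D[OF lo_mult[OF lm lo_X], of "-2"] by simp
    moreover have "(Z^2) $$ (-2) = 1"
      by (simp add: Z_def fls_X_inv_power_conv_shift_1)
    moreover have "((c4 - 1) * fls_X^2) $$ (-2) = 0"
      using lo_D[OF lcX, of "-2"] by simp
    moreover have "fls_const E0 $$ (-2) = 0" by simp
    ultimately have "(0::complex) - 0 + 0 - 1 + 0 - 0 = 0" using coef[of "-2"] by simp
    then show False by simp
  qed
  define P where "P = m0 + m0 + fls_X"
  have lP: "lo P (-1)"
    unfolding P_def using lo_add[OF lo_add[OF lm0 lm0] lo_mono[OF lo_X]] by simp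
  have P1: "P $$ (-1) = 2 * m0 $$ (-1)" by (simp add: P_def)
  have e1': "dd Z m1 = P * m1 + 1"
    using alg4[OF Znz e1] by (simp add: P_def iZ)
  show ?thesis
  proof
    assume z: "m1 $$ 1 = 0"
    show False
    proof (cases "m1 = 0")
      case True
      then have "(0::F) = 1" using e1' by (simp add: dd_def)
      then show False by simp
    next
      case False
      define e where "e = fls_subdegree m1"
      have u: "m1 $$ e \<noteq> 0" using False by (simp add: e_def)
      have lm1: "lo m1 e" unfolding e_def by (rule lo_subdeg)
      have ne: "e \<noteq> 1" using u z by auto
      have "dd Z m1 $$ (e - 1) = (P * m1 + 1) $$ (e - 1)" using e1' by simp
      moreover have "dd Z m1 $$ (e - 1) = 0"
        using lo_D[OF lo_dd_inf[OF lm1], of "e - 1"] by (simp add: Z_def)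
      moreover have "(P * m1) $$ (e - 1) = P $$ (-1) * m1 $$ e"
        using lo_mult_base[OF lP lm1] by (simp add: add.commute)
      moreover have "(1::F) $$ (e - 1) = 0" using ne by simp
      ultimately have "2 * m0 $$ (-1) * m1 $$ e = 0" using P1 by simp
      then show False using u lam by simp
    qed
  qed
qed


definition Za :: "complex \<Rightarrow> F" where "Za a = fls_X + fls_const a"

lemma evA_props: "lo (ev (Za a) p) 0 \<and> ev (Za a) p $$ 0 = poly p a"
proof (induction p)
  case 0 then show ?case by (simp add: ev_hom)
next
  case (pCons c p)
  have lZ: "lo (Za a) 0" by (simp add: Za_def lo_def)
  have l: "lo (Za a * ev (Za a) p) 0" using lo_mult[OF lZ] pCons.IH by fastforce
  have "(Za a * ev (Za a) p) $$ 0 = Za a $$ 0 * ev (Za a) p $$ 0"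
    using lo_mult_base[OF lZ, of "ev (Za a) p" 0] pCons.IH by simp
  then show ?case using l lo_add[OF lo_const l]
    by (simp add: ev_hom pCons.IH) (simp add: Za_def)
qed

lemma fls_const_diff': "fls_const a - fls_const b = fls_const (a - b :: complex)"
  by (metis diff_conv_add_uminus fls_plus_const fls_const_uminus)

lemma evA_lin: "ev (Za a) [:-b, 1:] = fls_X + fls_const (a - b)"
  by (simp add: ev_hom Za_def fls_const_diff'[symmetric] algebra_simps)

lemma evA_nz:
  assumes "p \<noteq> 0" shows "ev (Za a) p \<noteq> 0"
proof -
  obtain q where q: "p = [:-a, 1:] ^ order a p * q" "\<not> [:-a, 1:] dvd q"
    using order_decomp[OF assms] by blast
  have "poly q a \<noteq> 0" using q(2) poly_eq_0_iff_dvd by blast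
  then have "ev (Za a) q \<noteq> 0" using evA_props[of a q] by auto
  moreover have "ev (Za a) [:-a, 1:] \<noteq> 0" by (simp add: evA_lin)
  ultimately show ?thesis by (subst q(1)) (simp add: ev_hom)
qed

lemma evI_pos: "k > 0 \<Longrightarrow> ev fls_X_inv p $$ k = 0"
proof (induction p arbitrary: k)
  case 0 then show ?case by (simp add: ev_hom)
next
  case (pCons c p)
  then show ?case by (simp add: ev_hom fls_X_inv_times_conv_shift)
qed

lemma evI_lead: "ev fls_X_inv p $$ (- int (degree p)) = lead_coeff p"
proof (induction p)
  case 0 then show ?case by (simp add: ev_hom)
next
  case (pCons c p)
  show ?case
  proof (cases "p = 0")
    case True then show ?thesis by (simp add: ev_hom)
  next
    case False
    then have "degree (pCons c p) = degree p + 1" by simp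
    then show ?thesis using pCons.IH False
      by (simp add: ev_hom fls_X_inv_times_conv_shift algebra_simps)
  qed
qed

lemma evI_nz: "p \<noteq> 0 \<Longrightarrow> ev fls_X_inv p \<noteq> 0"
  using evI_lead[of p] by (metis fls_zero_nth leading_coeff_0_iff)


lemma split_id:
  fixes x r C p1 :: "'a::field"
  assumes "x \<noteq> 0" "r \<noteq> 0" "k \<ge> 1"
  shows "(C * r + x * p1) / (x^k * r) = C / x^k + p1 / (x^(k-1) * r)"
proof -
  obtain j where k: "k = Suc j" using assms(3) by (cases k) auto
  show ?thesis using assms(1,2) unfolding k by (simp add: field_simps)
qed

lemma lo_inv0:
  assumes "lo L 0" "L $$ 0 \<noteq> 0"
  shows "lo (inverse L) 0"
proof -
  have "fls_subdegree L = 0" using assms by (auto simp: lo_def intro!: fls_subdegree_eqI)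
  then show ?thesis using lo_inverse[of L] by simp
qed

lemma cterm_fin:
  assumes "c = 0 \<or> k \<ge> 2"
  shows "(fls_const c / ev (Za b) [:-a, 1:] ^ k) $$ (-1) = 0"
proof (cases "c = 0")
  case True then show ?thesis by simp
next
  case False
  then have k2: "k \<ge> 2" using assms by simp
  show ?thesis
  proof (cases "b = a")
    case True
    then have "ev (Za b) [:-a, 1:] = fls_X" by (simp add: evA_lin)
    then show ?thesis using k2
      by (simp add: divide_inverse fls_inverse_X_power)
  next
    case False
    define L where "L = ev (Za b) [:-a, 1:]"
    have L: "L = fls_X + fls_const (b - a)" by (simp add: L_def evA_lin)
    have lL: "lo L 0" by (simp add: L lo_def)
    have L0: "L $$ 0 \<noteq> 0" using False by (simp add: L)
    have "lo (L^k) (int k * 0)" by (rule lo_power[OF lL])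
    moreover have "(L^k) $$ 0 \<noteq> 0"
    proof -
      have "(L^k) $$ (int k * 0) = (L $$ 0)^k"
      proof (induction k)
        case 0 then show ?case by simp
      next
        case (Suc k)
        have "(L * L^k) $$ (0 + int k * 0) = L $$ 0 * (L^k) $$ (int k * 0)"
          by (rule lo_mult_base[OF lL lo_power[OF lL]])
        then show ?case using Suc by simp
      qed
      then show ?thesis using L0 by simp
    qed
    ultimately have "lo (inverse (L^k)) 0" by (intro lo_inv0) simp_all
    then have "lo (fls_const c * inverse (L^k)) (0 + 0)" by (rule lo_mult[OF lo_const])
    then show ?thesis by (simp add: L_def[symmetric] divide_inverse lo_def)
  qed
qed

lemma cterm_inf:
  assumes "c = 0 \<or> k \<ge> 2"
  shows "(fls_const c / ev fls_X_inv [:-a, 1:] ^ k) $$ 1 = 0"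
proof (cases "c = 0")
  case True then show ?thesis by simp
next
  case False
  then have k2: "k \<ge> 2" using assms by simp
  define L where "L = ev fls_X_inv [:-a, 1:]"
  have L: "L = fls_X_inv - fls_const a" by (simp add: L_def ev_hom algebra_simps)
  have "fls_subdegree L = -1" by (intro fls_subdegree_eqI) (simp_all add: L)
  moreover have "L \<noteq> 0" using fls_nonzeroI[of L "-1"] by (simp add: L)
  ultimately have "fls_subdegree (L^k) = - int k" by (simp add: fls_subdegree_pow)
  then have "lo (inverse (L^k)) (int k)" using lo_inverse[of "L^k"] by simp
  then have "lo (fls_const c * inverse (L^k)) (0 + int k)" by (rule lo_mult[OF lo_const])
  then show ?thesis using k2 by (simp add: L_def[symmetric] divide_inverse lo_def)
qed


lemma global_res:
  fixes P Q :: "complex poly"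
  assumes "Q \<noteq> 0" "\<forall>a. (ev (Za a) P / ev (Za a) Q) $$ (-1) = 0"
  shows "(ev fls_X_inv P / ev fls_X_inv Q) $$ 1 = 0"
  using assms
proof (induction "degree Q" arbitrary: P Q rule: less_induct)
  case less
  show ?case
  proof (cases "degree Q = 0")
    case True
    then have Qc: "Q = [:coeff Q 0:]" using degree_0_id by metis
    show ?thesis
      by (subst Qc) (simp add: ev_hom divide_inverse fls_inverse_const evI_pos)
  next
    case False
    then have "\<not> constant (poly Q)" by (simp add: constant_degree)
    then obtain a where ra: "poly Q a = 0"
      using fundamental_theorem_of_algebra[of Q] by auto
    define L :: "complex poly" where "L = [:-a, 1:]"
    define k where "k = order a Q"
    have k1: "k \<ge> 1" using ra less.prems(1) order_root[of Q a] by (simp add: k_def)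
    obtain R where QR: "Q = L^k * R" and nd: "\<not> L dvd R"
      using order_decomp[OF less.prems(1), of a] by (auto simp: L_def k_def)
    have Ra: "poly R a \<noteq> 0" using nd poly_eq_0_iff_dvd by (auto simp: L_def)
    then have Rnz: "R \<noteq> 0" by auto
    define c where "c = poly P a / poly R a"
    have "poly (P - smult c R) a = 0" using Ra by (simp add: c_def)
    then have "L dvd (P - smult c R)" unfolding L_def by (simp only: poly_eq_0_iff_dvd)
    then obtain P1 where P1: "P - smult c R = L * P1" by (elim dvdE)
    then have PP: "P = smult c R + L * P1" by (simp add: algebra_simps)
    define Q1 where "Q1 = L^(k-1) * R"
    have Lnz: "L \<noteq> 0" by (simp add: L_def)
    have Q1nz: "Q1 \<noteq> 0" using Rnz Lnz by (simp add: Q1_def)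
    have degL: "degree (L^n) = n" for n
      unfolding L_def using degree_linear_power[of "-a" n] by simp
    have "degree Q1 < degree Q"
      using k1 Rnz Lnz by (simp add: QR Q1_def degree_mult_eq degL)
    have dec: "ev Z P / ev Z Q = fls_const c / ev Z L ^ k + ev Z P1 / ev Z Q1"
      if "ev Z L \<noteq> 0" "ev Z R \<noteq> 0" for Z
    proof -
      have "ev Z P / ev Z Q = (fls_const c * ev Z R + ev Z L * ev Z P1) / (ev Z L ^ k * ev Z R)"
        by (simp add: PP QR ev_hom ev_smult)
      also have "\<dots> = fls_const c / ev Z L ^ k + ev Z P1 / (ev Z L ^ (k-1) * ev Z R)"
        by (rule split_id[OF that k1])
      finally show ?thesis by (simp add: Q1_def ev_hom)
    qed
    have evLa: "ev (Za b) L \<noteq> 0" "ev (Za b) R \<noteq> 0" for b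
      using evA_nz Lnz Rnz by auto
    have evLi: "ev fls_X_inv L \<noteq> 0" "ev fls_X_inv R \<noteq> 0"
      using evI_nz Lnz Rnz by auto
    have cz: "c = 0 \<or> k \<ge> 2"
    proof (cases "k = 1")
      case True
      have XL: "ev (Za a) L = fls_X" by (simp add: L_def evA_lin)
      have "(ev (Za a) P / ev (Za a) Q) $$ (-1) = 0" using less.prems(2) by blast
      moreover have "ev (Za a) P / ev (Za a) Q = fls_const c / fls_X + ev (Za a) P1 / ev (Za a) R"
        using dec[OF evLa] True XL by (simp add: Q1_def)
      moreover have "(ev (Za a) P1 / ev (Za a) R) $$ (-1) = 0"
      proof -
        have "lo (inverse (ev (Za a) R)) 0" using evA_props[of a R] Ra by (intro lo_inv0) auto
        then have "lo (ev (Za a) P1 * inverse (ev (Za a) R)) (0 + 0)"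
          using evA_props[of a P1] lo_mult by blast
        then show ?thesis by (simp add: divide_inverse lo_def)
      qed
      moreover have "(fls_const c / fls_X) $$ (-1) = c"
        by (simp add: divide_inverse fls_inverse_X)
      ultimately show ?thesis by simp
    qed (use k1 in auto)
    have "\<forall>b. (ev (Za b) P1 / ev (Za b) Q1) $$ (-1) = 0"
    proof
      fix b
      have "(ev (Za b) P / ev (Za b) Q) $$ (-1) = 0" using less.prems(2) by blast
      then show "(ev (Za b) P1 / ev (Za b) Q1) $$ (-1) = 0"
        using dec[OF evLa] cterm_fin[OF cz, of b a] by (simp add: L_def)
    qed
    then have "(ev fls_X_inv P1 / ev fls_X_inv Q1) $$ 1 = 0"
      using less.hyps[OF \<open>degree Q1 < degree Q\<close> Q1nz] by blast
    then show ?thesis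
      using dec[OF evLi] cterm_inf[OF cz, of a] by (simp add: L_def)
  qed
qed


theorem mainTheorem12:
  fixes \<nu> :: complex
  shows "\<not> (\<exists>(E0::complex) (A::bipoly) (B::bipoly).
             regular_at_E B E0 \<and> H_bigO3 \<nu> A B E0)"
proof
  assume "\<exists>(E0::complex) (A::bipoly) (B::bipoly). regular_at_E B E0 \<and> H_bigO3 \<nu> A B E0"
  then obtain E0 A B C Dd where rB: "regular_at_E B E0" and rD: "regular_at_E Dd E0"
    and eq: "Hnum \<nu> A B * Dd = (Evar - bconst E0)^3 * C * B^2"
    unfolding H_bigO3_def by blast
  define P1 where "P1 = tc E0 A 1 * tc E0 B 0 - tc E0 A 0 * tc E0 B 1"
  define Q1 where "Q1 = (tc E0 B 0)^2"
  have Q1nz: "Q1 \<noteq> 0" using rB by (simp add: Q1_def tc_0 regular_at_E_def)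
  have fin: "\<forall>a. (ev (Za a) P1 / ev (Za a) Q1) $$ (-1) = 0"
  proof
    fix a
    have dZ: "fls_deriv (Za a) \<noteq> 0" by (simp add: Za_def)
    have inj: "\<And>p. ev (Za a) p = 0 \<Longrightarrow> p = 0" using evA_nz by blast
    obtain m0 m1 m2 where
      e0: "(Za a)^2 * (m0^2 - dd (Za a) m0) + (Za a) * m0 - (Za a)^4 + (Za a)^2 * fls_const E0
            - fls_const (4 * \<nu>^2) + 1 = 0"
      and e1: "(Za a)^2 * (2 * m0 * m1 - dd (Za a) m1) + (Za a) * m1 + (Za a)^2 = 0"
      and e2: "(Za a)^2 * (2 * m0 * m2 + m1^2 - dd (Za a) m2) + (Za a) * m2 = 0"
      and m1: "m1 = ev (Za a) P1 / ev (Za a) Q1"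
      using extract_eqs[OF dZ inj rB rD eq] unfolding P1_def Q1_def by blast
    have "m1 $$ (-1) = 0"
      using finite_point[of a m0 E0 "fls_const (4 * \<nu>^2)" m1 m2 "4 * \<nu>^2"] e0 e1 e2
      unfolding Za_def by blast
    then show "(ev (Za a) P1 / ev (Za a) Q1) $$ (-1) = 0" using m1 by simp
  qed
  have z: "(ev fls_X_inv P1 / ev fls_X_inv Q1) $$ 1 = 0" by (rule global_res[OF Q1nz fin])
  have dZ: "fls_deriv (fls_X_inv :: F) \<noteq> 0" by simp
  have inj: "\<And>p. ev fls_X_inv p = 0 \<Longrightarrow> p = 0" using evI_nz by blast
  obtain m0 m1 m2 where
    e0: "fls_X_inv^2 * (m0^2 - dd fls_X_inv m0) + fls_X_inv * m0 - fls_X_inv^4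
          + fls_X_inv^2 * fls_const E0 - fls_const (4 * \<nu>^2) + 1 = 0"
    and e1: "fls_X_inv^2 * (2 * m0 * m1 - dd fls_X_inv m1) + fls_X_inv * m1 + fls_X_inv^2 = 0"
    and m1: "m1 = ev fls_X_inv P1 / ev fls_X_inv Q1"
    using extract_eqs[OF dZ inj rB rD eq] unfolding P1_def Q1_def by blast
  have "m1 $$ 1 \<noteq> 0"
    using infinite_point[of m0 E0 "fls_const (4 * \<nu>^2)" m1 "4 * \<nu>^2"] e0 e1 by blast
  then show False using z m1 by simp
qed

end
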